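(* Let $(\mathcal P,\cdot,[-,\dots,-])$ be a finite-dimensional solvable Poisson $n$-Lie algebra over an algebraically closed field of characteristic zero. Then $\operatorname{Nil}(\mathcal P)$ coincides with the nilradical of the $n$-Lie algebra $\mathcal P_L=(\mathcal P,[-,\dots,-])$.
   Context: A Poisson $n$-Lie algebra is a commutative associative algebra $(\mathcal P,\cdot)$ with an $n$-linear skew-symmetric bracket satisfying the fundamental identity $[x_1,\dots,x_{n-1},[y_1,\dots,y_n]]=\sum_{i=1}^n[y_1,\dots,[x_1,\dots,x_{n-1},y_i],\dots,y_n]$ and the Leibniz rule $[y\cdot z,x_2,\dots,x_n]=y\cdot[z,x_2,\dots,x_n]+z\cdot[y,x_2,\dots,x_n]$. Products/brackets of subspaces are linear spans. An ideal $\mathcal I$ of $\mathcal P$ satisfies $\mathcal P\cdot\mathcal I\subseteq\mathcal I$, $[\mathcal I,\mathcal P,\dots,\mathcal P]\subseteq\mathcal I$; it is nilpotent if $\mathcal I^s=0$ for some $s$, where $\mathcal I^1=\mathcal I$, $\mathcal I^{k+1}=[\mathcal I^k,\mathcal I,\mathcal P,\dots,\mathcal P]+\mathcal I^k\cdot\mathcal I$. $\operatorname{Nil}(\mathcal P)$ is the maximal nilpotent ideal of $\mathcal P$. The nilradical of $\mathcal P_L$ is its maximal nilpotent ideal, where an ideal $N$ of $\mathcal P_L$ is nilpotent if $N^s=0$ with $N^1=N$, $N^{k+1}=[N^k,N,\mathcal P,\dots,\mathcal P]$. $\mathcal P$ is solvable if $\mathcal P^{(s)}=0$ for some $s$, with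 $\mathcal P^{(1)}=\mathcal P$, $\mathcal P^{(k+1)}=[\mathcal P^{(k)},\mathcal P^{(k)},\mathcal P,\dots,\mathcal P]+\mathcal P^{(k)}\cdot\mathcal P^{(k)}$. *)

theory Defs
  imports Main "HOL-Computational_Algebra.Polynomial"
begin

definition alg_closed :: "'k::field itself \<Rightarrow> bool" where
  "alg_closed _ \<longleftrightarrow> (\<forall>p :: 'k poly. 0 < degree p \<longrightarrow> (\<exists>x. poly p x = 0))"

definition fin_dim_vs :: "('k::field \<Rightarrow> 'v::ab_group_add \<Rightarrow> 'v) \<Rightarrow> bool" where
  "fin_dim_vs sc \<longleftrightarrow> (\<exists>B. finite_dimensional_vector_space sc B)"

definition multilinear :: "('k::field \<Rightarrow> 'v::ab_group_add \<Rightarrow> 'v) \<Rightarrow> nat \<Rightarrow> ('v list \<Rightarrow> 'v) \<Rightarrow> bool" where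
  "multilinear sc n br \<longleftrightarrow>
     (\<forall>xs i a b u w. length xs = n \<longrightarrow> i < n \<longrightarrow>
        br (xs[i := sc a u + sc b w]) = sc a (br (xs[i := u])) + sc b (br (xs[i := w])))"

definition skew_symmetric :: "nat \<Rightarrow> ('v::ab_group_add list \<Rightarrow> 'v) \<Rightarrow> bool" where
  "skew_symmetric n br \<longleftrightarrow>
     (\<forall>xs i j. length xs = n \<longrightarrow> i < j \<longrightarrow> j < n \<longrightarrow>
        br (xs[i := xs ! j, j := xs ! i]) = - br xs)"

definition fundamental_identity :: "nat \<Rightarrow> ('v::ab_group_add list \<Rightarrow> 'v) \<Rightarrow> bool" where
  "fundamental_identity n br \<longleftrightarrow>
     (\<forall>xs ys. length xs = n - 1 \<longrightarrow> length ys = n \<longrightarrow>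
        br (xs @ [br ys]) = (\<Sum>i<n. br (ys[i := br (xs @ [ys ! i])])))"

definition leibniz_rule :: "nat \<Rightarrow> ('v::ab_group_add \<Rightarrow> 'v \<Rightarrow> 'v) \<Rightarrow> ('v list \<Rightarrow> 'v) \<Rightarrow> bool" where
  "leibniz_rule n mul br \<longleftrightarrow>
     (\<forall>y z xs. length xs = n - 1 \<longrightarrow>
        br (mul y z # xs) = mul y (br (z # xs)) + mul z (br (y # xs)))"

definition comm_assoc_algebra :: "('k::field \<Rightarrow> 'v::ab_group_add \<Rightarrow> 'v) \<Rightarrow> ('v \<Rightarrow> 'v \<Rightarrow> 'v) \<Rightarrow> bool" where
  "comm_assoc_algebra sc mul \<longleftrightarrow>
     (\<forall>x y. mul x y = mul y x) \<and>
     (\<forall>x y z. mul (mul x y) z = mul x (mul y z)) \<and>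
     (\<forall>a b u w z. mul (sc a u + sc b w) z = sc a (mul u z) + sc b (mul w z))"

definition poisson_nlie :: "('k::field \<Rightarrow> 'v::ab_group_add \<Rightarrow> 'v) \<Rightarrow> nat \<Rightarrow> ('v \<Rightarrow> 'v \<Rightarrow> 'v) \<Rightarrow> ('v list \<Rightarrow> 'v) \<Rightarrow> bool" where
  "poisson_nlie sc n mul br \<longleftrightarrow>
     vector_space sc \<and> 2 \<le> n \<and> comm_assoc_algebra sc mul \<and>
     multilinear sc n br \<and> skew_symmetric n br \<and> fundamental_identity n br \<and> leibniz_rule n mul br"

definition br_sets :: "('k::field \<Rightarrow> 'v::ab_group_add \<Rightarrow> 'v) \<Rightarrow> ('v list \<Rightarrow> 'v) \<Rightarrow> 'v set list \<Rightarrow> 'v set" where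
  "br_sets sc br Ss = module.span sc {br xs | xs. list_all2 (\<in>) xs Ss}"

definition mul_sets :: "('k::field \<Rightarrow> 'v::ab_group_add \<Rightarrow> 'v) \<Rightarrow> ('v \<Rightarrow> 'v \<Rightarrow> 'v) \<Rightarrow> 'v set \<Rightarrow> 'v set \<Rightarrow> 'v set" where
  "mul_sets sc mul A B = module.span sc {mul a b | a b. a \<in> A \<and> b \<in> B}"

definition sum_sets :: "('k::field \<Rightarrow> 'v::ab_group_add \<Rightarrow> 'v) \<Rightarrow> 'v set \<Rightarrow> 'v set \<Rightarrow> 'v set" where
  "sum_sets sc A B = module.span sc (A \<union> B)"

definition poisson_ideal :: "('k::field \<Rightarrow> 'v::ab_group_add \<Rightarrow> 'v) \<Rightarrow> nat \<Rightarrow> ('v \<Rightarrow> 'v \<Rightarrow> 'v) \<Rightarrow> ('v list \<Rightarrow> 'v) \<Rightarrow> 'v set \<Rightarrow> bool" where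
  "poisson_ideal sc n mul br I \<longleftrightarrow>
     module.subspace sc I \<and> mul_sets sc mul UNIV I \<subseteq> I \<and>
     br_sets sc br (I # replicate (n - 1) UNIV) \<subseteq> I"

definition lie_ideal :: "('k::field \<Rightarrow> 'v::ab_group_add \<Rightarrow> 'v) \<Rightarrow> nat \<Rightarrow> ('v list \<Rightarrow> 'v) \<Rightarrow> 'v set \<Rightarrow> bool" where
  "lie_ideal sc n br I \<longleftrightarrow>
     module.subspace sc I \<and> br_sets sc br (I # replicate (n - 1) UNIV) \<subseteq> I"

(* poisson_pow ... I k is I^(k+1):  I^1 = I,
   I^(k+1) = [I^k, I, P, ..., P] + I^k \<cdot> I *)
fun poisson_pow :: "('k::field \<Rightarrow> 'v::ab_group_add \<Rightarrow> 'v) \<Rightarrow> nat \<Rightarrow> ('v \<Rightarrow> 'v \<Rightarrow> 'v) \<Rightarrow> ('v list \<Rightarrow> 'v) \<Rightarrow> 'v set \<Rightarrow> nat \<Rightarrow> 'v set" where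
  "poisson_pow sc n mul br I 0 = I"
| "poisson_pow sc n mul br I (Suc k) =
     sum_sets sc (br_sets sc br (poisson_pow sc n mul br I k # I # replicate (n - 2) UNIV))
                 (mul_sets sc mul (poisson_pow sc n mul br I k) I)"

(* lie_pow ... N k is N^(k+1):  N^1 = N, N^(k+1) = [N^k, N, P, ..., P] *)
fun lie_pow :: "('k::field \<Rightarrow> 'v::ab_group_add \<Rightarrow> 'v) \<Rightarrow> nat \<Rightarrow> ('v list \<Rightarrow> 'v) \<Rightarrow> 'v set \<Rightarrow> nat \<Rightarrow> 'v set" where
  "lie_pow sc n br N 0 = N"
| "lie_pow sc n br N (Suc k) = br_sets sc br (lie_pow sc n br N k # N # replicate (n - 2) UNIV)"

(* derived_pow ... k is P^(k+1): P^(1) = P,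
   P^(k+1) = [P^(k), P^(k), P, ..., P] + P^(k) \<cdot> P^(k) *)
fun derived_pow :: "('k::field \<Rightarrow> 'v::ab_group_add \<Rightarrow> 'v) \<Rightarrow> nat \<Rightarrow> ('v \<Rightarrow> 'v \<Rightarrow> 'v) \<Rightarrow> ('v list \<Rightarrow> 'v) \<Rightarrow> nat \<Rightarrow> 'v set" where
  "derived_pow sc n mul br 0 = UNIV"
| "derived_pow sc n mul br (Suc k) =
     sum_sets sc (br_sets sc br (derived_pow sc n mul br k # derived_pow sc n mul br k # replicate (n - 2) UNIV))
                 (mul_sets sc mul (derived_pow sc n mul br k) (derived_pow sc n mul br k))"

definition poisson_solvable :: "('k::field \<Rightarrow> 'v::ab_group_add \<Rightarrow> 'v) \<Rightarrow> nat \<Rightarrow> ('v \<Rightarrow> 'v \<Rightarrow> 'v) \<Rightarrow> ('v list \<Rightarrow> 'v) \<Rightarrow> bool" where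
  "poisson_solvable sc n mul br \<longleftrightarrow> (\<exists>s. derived_pow sc n mul br s = {0})"

definition poisson_nilpotent_ideal :: "('k::field \<Rightarrow> 'v::ab_group_add \<Rightarrow> 'v) \<Rightarrow> nat \<Rightarrow> ('v \<Rightarrow> 'v \<Rightarrow> 'v) \<Rightarrow> ('v list \<Rightarrow> 'v) \<Rightarrow> 'v set \<Rightarrow> bool" where
  "poisson_nilpotent_ideal sc n mul br I \<longleftrightarrow>
     poisson_ideal sc n mul br I \<and> (\<exists>s. poisson_pow sc n mul br I s = {0})"

definition lie_nilpotent_ideal :: "('k::field \<Rightarrow> 'v::ab_group_add \<Rightarrow> 'v) \<Rightarrow> nat \<Rightarrow> ('v list \<Rightarrow> 'v) \<Rightarrow> 'v set \<Rightarrow> bool" where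
  "lie_nilpotent_ideal sc n br N \<longleftrightarrow>
     lie_ideal sc n br N \<and> (\<exists>s. lie_pow sc n br N s = {0})"

definition is_Nil :: "('k::field \<Rightarrow> 'v::ab_group_add \<Rightarrow> 'v) \<Rightarrow> nat \<Rightarrow> ('v \<Rightarrow> 'v \<Rightarrow> 'v) \<Rightarrow> ('v list \<Rightarrow> 'v) \<Rightarrow> 'v set \<Rightarrow> bool" where
  "is_Nil sc n mul br N \<longleftrightarrow>
     poisson_nilpotent_ideal sc n mul br N \<and>
     (\<forall>I. poisson_nilpotent_ideal sc n mul br I \<longrightarrow> I \<subseteq> N)"

definition is_nilradical :: "('k::field \<Rightarrow> 'v::ab_group_add \<Rightarrow> 'v) \<Rightarrow> nat \<Rightarrow> ('v list \<Rightarrow> 'v) \<Rightarrow> 'v set \<Rightarrow> bool" where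
  "is_nilradical sc n br N \<longleftrightarrow>
     lie_nilpotent_ideal sc n br N \<and>
     (\<forall>I. lie_nilpotent_ideal sc n br I \<longrightarrow> I \<subseteq> N)"

end

theory Submission
  imports Defs
begin

locale PN =
  fixes sc :: "'k::field \<Rightarrow> 'v::ab_group_add \<Rightarrow> 'v"
    and n :: nat and mul :: "'v \<Rightarrow> 'v \<Rightarrow> 'v" and br :: "'v list \<Rightarrow> 'v"
  assumes PA: "poisson_nlie sc n mul br"

sublocale PN \<subseteq> vector_space sc
  using PA by (simp add: poisson_nlie_def)

context PN begin

lemma n2: "2 \<le> n" using PA by (simp add: poisson_nlie_def)
lemma MLIN: "multilinear sc n br" using PA by (simp add: poisson_nlie_def)
lemma SK: "skew_symmetric n br" using PA by (simp add: poisson_nlie_def)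
lemma FI: "fundamental_identity n br" using PA by (simp add: poisson_nlie_def)
lemma LR: "leibniz_rule n mul br" using PA by (simp add: poisson_nlie_def)
lemma CA: "comm_assoc_algebra sc mul" using PA by (simp add: poisson_nlie_def)

lemma mul_comm: "mul x y = mul y x" using CA unfolding comm_assoc_algebra_def by blast
lemma mul_assoc: "mul (mul x y) z = mul x (mul y z)" using CA unfolding comm_assoc_algebra_def by blast
lemma mul_lin: "mul (sc a u + sc b w) z = sc a (mul u z) + sc b (mul w z)"
  using CA unfolding comm_assoc_algebra_def by blast
lemma mul_add: "mul (u + w) z = mul u z + mul w z"
  using mul_lin[of 1 u 1 w z] by simp
lemma mul_scale: "mul (sc a u) z = sc a (mul u z)"
  using mul_lin[of a u 0 u z] by simp
lemma mul_zero[simp]: "mul 0 z = 0"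
  using mul_lin[of 0 z 0 z z] by simp
lemma mul_zero2[simp]: "mul z 0 = 0"
  using mul_zero mul_comm by metis

lemma br_lin: "length xs = n \<Longrightarrow> i < n \<Longrightarrow>
   br (xs[i := sc a u + sc b w]) = sc a (br (xs[i := u])) + sc b (br (xs[i := w]))"
  using MLIN by (simp add: multilinear_def)
lemma br_add: "length xs = n \<Longrightarrow> i < n \<Longrightarrow> br (xs[i := u + w]) = br (xs[i := u]) + br (xs[i := w])"
  using br_lin[of xs i 1 u 1 w] by simp
lemma br_scale: "length xs = n \<Longrightarrow> i < n \<Longrightarrow> br (xs[i := sc a u]) = sc a (br (xs[i := u]))"
  using br_lin[of xs i a u 0 u] by simp
lemma br_zero: "length xs = n \<Longrightarrow> i < n \<Longrightarrow> br (xs[i := 0]) = 0"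
  using br_lin[of xs i 0 u 0 u] by simp

lemma slot_span:
  assumes "length xs = n" "i < n" "x \<in> span S" "subspace T"
    and "\<And>s. s \<in> S \<Longrightarrow> br (xs[i := s]) \<in> T"
  shows "br (xs[i := x]) \<in> T"
proof -
  have "subspace {x. br (xs[i := x]) \<in> T}"
    using assms(1,2,4) unfolding subspace_def
    by (auto simp: br_zero br_add br_scale)
  then show ?thesis using span_induct[OF assms(3), of "\<lambda>x. br (xs[i := x]) \<in> T"] assms(5) by auto
qed

lemma slot0_span:
  assumes "length zs = n - 1" "x \<in> span S" "subspace T"
    and "\<And>s. s \<in> S \<Longrightarrow> br (s # zs) \<in> T"
  shows "br (x # zs) \<in> T"
  using slot_span[of "x # zs" 0 x S T] assms n2 by auto

lemma slot1_span:
  assumes "length zs = n - 2" "x \<in> span S" "subspace T"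
    and "\<And>s. s \<in> S \<Longrightarrow> br (y # s # zs) \<in> T"
  shows "br (y # x # zs) \<in> T"
  using slot_span[of "y # x # zs" 1 x S T] assms n2 by auto

lemma mul_span_left:
  assumes "x \<in> span S" "subspace T" "\<And>s. s \<in> S \<Longrightarrow> mul s y \<in> T"
  shows "mul x y \<in> T"
proof -
  have "subspace {x. mul x y \<in> T}"
    using assms(2) unfolding subspace_def
    by (auto simp: mul_add mul_scale)
  then show ?thesis using span_induct[OF assms(1), of "\<lambda>x. mul x y \<in> T"] assms(3) by auto
qed

lemma mul_span_right:
  assumes "x \<in> span S" "subspace T" "\<And>s. s \<in> S \<Longrightarrow> mul y s \<in> T"
  shows "mul y x \<in> T"
  using mul_span_left[OF assms(1,2), of y] assms(3) mul_comm by metis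

lemma skew: "length xs = n \<Longrightarrow> i < j \<Longrightarrow> j < n \<Longrightarrow> br (xs[i := xs ! j, j := xs ! i]) = - br xs"
  using SK by (simp add: skew_symmetric_def)

lemma swap_mem:
  assumes "length xs = n" "i < j" "j < n" "subspace S" "br xs \<in> S"
  shows "br (xs[i := xs ! j, j := xs ! i]) \<in> S"
  using skew[OF assms(1-3)] assms(4,5) subspace_neg by metis

definition ideal_like :: "'v set \<Rightarrow> bool" where
  "ideal_like S \<longleftrightarrow> subspace S \<and> (\<forall>x\<in>S. \<forall>ws. length ws = n - 1 \<longrightarrow> br (x # ws) \<in> S)"

lemma anyslot:
  assumes "ideal_like S" "length xs = n" "i < n" "xs ! i \<in> S"
  shows "br xs \<in> S"
proof (cases i)
  case 0
  then show ?thesis using assms n2 unfolding ideal_like_def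
    by (cases xs) auto
next
  case (Suc j)
  let ?ys = "xs[0 := xs ! i, i := xs ! 0]"
  have l: "length ?ys = n" using assms by simp
  have y0: "?ys ! 0 = xs ! i" using assms Suc by simp
  have yc: "?ys = ?ys ! 0 # tl ?ys" using l n2 by (cases ?ys) auto
  have "length (tl ?ys) = n - 1" using l by simp
  then have "br (?ys ! 0 # tl ?ys) \<in> S" using assms(1,4) y0 unfolding ideal_like_def by auto
  then have "br ?ys \<in> S" using yc by metis
  moreover have "?ys[0 := ?ys ! i, i := ?ys ! 0] = xs"
    proof (rule nth_equalityI)
    fix k assume "k < length (?ys[0 := ?ys ! i, i := ?ys ! 0])"
    then show "?ys[0 := ?ys ! i, i := ?ys ! 0] ! k = xs ! k"
      using assms Suc by (cases "k = 0"; cases "k = i") (simp_all add: nth_list_update)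
  qed simp
  ultimately show ?thesis using swap_mem[OF l, of 0 i S] assms Suc unfolding ideal_like_def by auto
qed

lemma la_rep: "list_all2 (\<in>) ws (replicate m UNIV) \<longleftrightarrow> length ws = m"
  by (auto simp: list_all2_conv_all_nth)

lemma la_cons: "list_all2 (\<in>) xs (S # replicate m UNIV) \<longleftrightarrow> (\<exists>x ws. xs = x # ws \<and> x \<in> S \<and> length ws = m)"
  by (cases xs) (auto simp: la_rep)

lemma la_cons2: "list_all2 (\<in>) xs (S # T # replicate m UNIV) \<longleftrightarrow>
   (\<exists>x y zs. xs = x # y # zs \<and> x \<in> S \<and> y \<in> T \<and> length zs = m)"
  by (cases xs; cases "tl xs") (auto simp: la_rep)

lemma lie_ideal_iff: "lie_ideal sc n br S \<longleftrightarrow> ideal_like S"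
proof
  assume a: "lie_ideal sc n br S"
  show "ideal_like S" unfolding ideal_like_def
  proof (intro conjI ballI allI impI)
    show "subspace S" using a by (simp add: lie_ideal_def)
    fix x and ws :: "'v list" assume "x \<in> S" "length ws = n - 1"
    then have "br (x # ws) \<in> br_sets sc br (S # replicate (n - 1) UNIV)"
      unfolding br_sets_def by (intro span_base) (auto simp: la_cons)
    then show "br (x # ws) \<in> S" using a by (auto simp: lie_ideal_def)
  qed
next
  assume a: "ideal_like S"
  show "lie_ideal sc n br S" unfolding lie_ideal_def br_sets_def
  proof (intro conjI)
    show "subspace S" using a by (simp add: ideal_like_def)
    show "span {br xs |xs. list_all2 (\<in>) xs (S # replicate (n - 1) UNIV)} \<subseteq> S"
      using a by (intro span_minimal) (auto simp: ideal_like_def la_cons)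
  qed
qed

lemma lie_pow_sub: "subspace N \<Longrightarrow> subspace (lie_pow sc n br N k)"
  by (cases k) (auto simp: br_sets_def)

lemma gen_in: "a \<in> lie_pow sc n br N k \<Longrightarrow> b \<in> N \<Longrightarrow> length zs = n - 2 \<Longrightarrow>
   br (a # b # zs) \<in> lie_pow sc n br N (Suc k)"
  by (auto simp: br_sets_def la_cons2 intro!: span_base)

lemma last_swap:
  assumes "length ws = n - 1" "subspace T" "\<And>vs. length vs = n - 1 \<Longrightarrow> br (vs @ [s]) \<in> T"
  shows "br (s # ws) \<in> T"
proof -
  have "ws \<noteq> []" using assms(1) n2 by auto
  then obtain bw l where ws: "ws = bw @ [l]" by (metis rev_exhaust)
  let ?L = "(l # bw) @ [s]"
  have len: "length ?L = n" "length bw = n - 2" using assms(1) ws n2 by auto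
  have "br ?L \<in> T" using assms(3)[of "l # bw"] len n2 by simp
  moreover have "?L[0 := ?L ! (n - 1), n - 1 := ?L ! 0] = s # ws"
  proof -
    obtain m where m: "n = Suc (Suc m)" using n2 by (metis add_2_eq_Suc le_Suc_ex)
    then have lb: "length bw = m" using len by simp
    have "?L ! (n - 1) = s" using m lb by (simp add: nth_append)
    moreover have "?L ! 0 = l" by simp
    moreover have "(s # bw @ [s])[Suc m := l] = s # bw @ [l]"
      using lb list_update_length[of bw s "[]" l] by simp
    ultimately show ?thesis using m ws by simp
  qed
  ultimately show ?thesis using swap_mem[of ?L 0 "n - 1" T] len n2 assms(2) by auto
qed

lemma lie_pow_ideal:
  assumes N: "ideal_like N"
  shows "ideal_like (lie_pow sc n br N k)"
proof (induction k)
  case 0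
  then show ?case using N by simp
next
  case (Suc k)
  let ?Nk = "lie_pow sc n br N k"
  let ?G = "{br xs |xs. list_all2 (\<in>) xs (?Nk # N # replicate (n - 2) UNIV)}"
  have sub: "subspace (lie_pow sc n br N (Suc k))" by (simp add: br_sets_def)
  have "br (x # ws) \<in> lie_pow sc n br N (Suc k)"
    if x: "x \<in> lie_pow sc n br N (Suc k)" and ws: "length ws = n - 1" for x ws
  proof -
    have xs: "x \<in> span ?G" using x by (simp add: br_sets_def)
    show ?thesis
    proof (rule slot0_span[OF ws xs sub])
      fix s assume "s \<in> ?G"
      then obtain y m zs where s: "s = br (y # m # zs)" and y: "y \<in> ?Nk" and m: "m \<in> N"
        and zs: "length zs = n - 2" by (auto simp: la_cons2)
      show "br (s # ws) \<in> lie_pow sc n br N (Suc k)"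
      proof (rule last_swap[OF ws sub])
        fix vs :: "'v list" assume vs: "length vs = n - 1"
        let ?ys = "y # m # zs"
        have ly: "length ?ys = n" using zs n2 by auto
        have "br (vs @ [br ?ys]) = (\<Sum>i<n. br (?ys[i := br (vs @ [?ys ! i])]))"
          using FI vs ly by (simp add: fundamental_identity_def)
        also have "\<dots> \<in> lie_pow sc n br N (Suc k)"
        proof (rule subspace_sum[OF sub])
          fix i assume "i \<in> {..<n}"
          then have i: "i < n" by simp
          have an: "br (vs @ [t]) \<in> S" if "ideal_like S" "t \<in> S" for S t
            using anyslot[OF that(1), of "vs @ [t]" "n - 1"] vs n2 that(2)
            by (auto simp: nth_append)
          show "br (?ys[i := br (vs @ [?ys ! i])]) \<in> lie_pow sc n br N (Suc k)"
          proof (cases i)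
            case 0
            then show ?thesis using an[OF Suc.IH y] gen_in m zs by simp
          next
            case (Suc j)
            show ?thesis
            proof (cases j)
              case 0
              then show ?thesis using an[OF N m] gen_in[OF y _ zs] Suc by simp
            next
              case (Suc j')
              then show ?thesis using gen_in[OF y m, of "zs[j' := br (vs @ [?ys ! i])]"] zs \<open>i = Suc j\<close>
                by simp
            qed
          qed
        qed
        finally show "br (vs @ [s]) \<in> lie_pow sc n br N (Suc k)" using s by simp
      qed
    qed
  qed
  then show ?case unfolding ideal_like_def using sub by blast
qed

lemma swap01: "length zs = n - 2 \<Longrightarrow> br (b # a # zs) = - br (a # b # zs)"
  using skew[of "a # b # zs" 0 1] n2 by simp

lemma leib: "length xs = n - 1 \<Longrightarrow> br (mul y z # xs) = mul y (br (z # xs)) + mul z (br (y # xs))"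
  using LR by (simp add: leibniz_rule_def)

fun Nf :: "'v set \<Rightarrow> nat \<Rightarrow> 'v set" where
  "Nf N 0 = UNIV"
| "Nf N (Suc a) = lie_pow sc n br N a"

lemma Nf_ideal: "ideal_like N \<Longrightarrow> ideal_like (Nf N a)"
  by (cases a) (simp_all add: lie_pow_ideal, simp add: ideal_like_def)

lemma nf_step:
  assumes N: "ideal_like N" and x: "x \<in> Nf N a" and k: "k \<in> N" and zs: "length zs = n - 2"
  shows "br (x # k # zs) \<in> Nf N (Suc a)"
proof (cases a)
  case 0
  then show ?thesis using anyslot[OF N, of "x # k # zs" 1] zs n2 k by simp
next
  case (Suc a')
  then show ?thesis using gen_in[of x N a' k zs] x k zs by simp
qed

lemma lie_pow_zero:
  assumes "lie_pow sc n br N s = {0}" "s \<le> k"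
  shows "lie_pow sc n br N k = {0}"
  using assms(2)
proof (induction k rule: dec_induct)
  case base
  then show ?case using assms(1) .
next
  case (step k)
  let ?G = "{br xs |xs. list_all2 (\<in>) xs (lie_pow sc n br N k # N # replicate (n - 2) UNIV)}"
  have "?G \<subseteq> {0}"
  proof
    fix v assume "v \<in> ?G"
    then obtain xs where v: "v = br xs" and la: "list_all2 (\<in>) xs (lie_pow sc n br N k # N # replicate (n - 2) UNIV)"
      by blast
    then obtain x y zs where xs: "xs = x # y # zs" and x: "x \<in> lie_pow sc n br N k" and zs: "length zs = n - 2"
      unfolding la_cons2 by blast
    have "x = 0" using x step.IH by blast
    then show "v \<in> {0}" using br_zero[of "0 # y # zs" 0] n2 v xs zs by simp
  qed
  then have "span ?G \<subseteq> {0}" by (rule span_minimal) simp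
  then show ?case using span_zero[of ?G] by (auto simp: br_sets_def)
qed

fun Ap :: "nat \<Rightarrow> 'v set" where
  "Ap 0 = UNIV"
| "Ap (Suc i) = {mul p x | p x. x \<in> Ap i}"

lemma Ap_mul: "x \<in> Ap i \<Longrightarrow> y \<in> Ap j \<Longrightarrow> mul x y \<in> Ap (i + j + 1)"
proof (induction i arbitrary: x)
  case 0
  then show ?case by auto
next
  case (Suc i)
  then obtain p x' where "x = mul p x'" "x' \<in> Ap i" by auto
  then show ?case using Suc.IH[of x'] Suc.prems mul_assoc by auto
qed

lemma Ap_split: "x \<in> Ap (i + j + 1) \<Longrightarrow> \<exists>a b. a \<in> Ap i \<and> b \<in> Ap j \<and> x = mul a b"
proof (induction i arbitrary: x)
  case 0
  then show ?case by auto
next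
  case (Suc i)
  then obtain p y where "x = mul p y" "y \<in> Ap (i + j + 1)" by auto
  then obtain a b where "a \<in> Ap i" "b \<in> Ap j" "y = mul a b" using Suc.IH by blast
  then show ?case using \<open>x = mul p y\<close> mul_assoc
    by (intro exI[of _ "mul p a"] exI[of _ b]) auto
qed

lemma Ap_Suc_sub: "Ap (Suc i) \<subseteq> Ap i"
proof (induction i)
  case 0
  then show ?case by simp
next
  case (Suc i)
  show ?case
  proof
    fix z assume "z \<in> Ap (Suc (Suc i))"
    then obtain p y where "z = mul p y" "y \<in> Ap (Suc i)" by auto
    then have "y \<in> Ap i" using Suc.IH by blast
    then show "z \<in> Ap (Suc i)" using \<open>z = mul p y\<close> by auto
  qed
qed

lemma Ap_mono: "i \<le> j \<Longrightarrow> Ap j \<subseteq> Ap i"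
proof (induction j rule: dec_induct)
  case base
  then show ?case by simp
next
  case (step j)
  then show ?case using Ap_Suc_sub by blast
qed

lemma Ap_derived: "Ap (2 ^ k - 1) \<subseteq> derived_pow sc n mul br k"
proof (induction k)
  case 0
  then show ?case by simp
next
  case (Suc k)
  show ?case
  proof
    fix x assume "x \<in> Ap (2 ^ Suc k - 1)"
    moreover have "2 ^ Suc k - 1 = (2 ^ k - 1) + (2 ^ k - 1) + (1::nat)"
    proof -
      have "(1::nat) \<le> 2 ^ k" by simp
      moreover have "(2::nat) ^ Suc k = 2 ^ k + 2 ^ k" by simp
      ultimately show ?thesis by linarith
    qed
    ultimately obtain a b where "a \<in> Ap (2 ^ k - 1)" "b \<in> Ap (2 ^ k - 1)" "x = mul a b"
      using Ap_split by metis
    then have "x \<in> mul_sets sc mul (derived_pow sc n mul br k) (derived_pow sc n mul br k)"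
      using Suc.IH unfolding mul_sets_def by (intro span_base) blast
    then show "x \<in> derived_pow sc n mul br (Suc k)"
      by (simp add: sum_sets_def span_base)
  qed
qed

inductive Gp :: "'v set \<Rightarrow> nat \<Rightarrow> 'v \<Rightarrow> bool" for N where
  single: "x \<in> Nf N a \<Longrightarrow> w \<le> Suc a \<Longrightarrow> Gp N w x"
| prod: "Gp N w1 x \<Longrightarrow> Gp N w2 y \<Longrightarrow> w \<le> w1 + w2 \<Longrightarrow> Gp N w (mul x y)"

lemma Gp_vanish:
  assumes "Gp N w x" "lie_pow sc n br N s = {0}"
  shows "x = 0 \<or> (\<exists>r. x \<in> Ap r \<and> w \<le> (r + 1) * (s + 1))"
  using assms(1)
proof (induction rule: Gp.induct)
  case (single x a w)
  show ?case
  proof (cases "a \<le> s")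
    case True
    then show ?thesis using single by (intro disjI2 exI[of _ 0]) auto
  next
    case False
    then obtain a' where "a = Suc a'" "s \<le> a'" by (cases a) auto
    then show ?thesis using single lie_pow_zero[OF assms(2)] by auto
  qed
next
  case (prod w1 x w2 y w)
  show ?case
  proof (cases "x = 0 \<or> y = 0")
    case True
    then show ?thesis by auto
  next
    case False
    then obtain r1 r2 where "x \<in> Ap r1" "w1 \<le> (r1 + 1) * (s + 1)" "y \<in> Ap r2" "w2 \<le> (r2 + 1) * (s + 1)"
      using prod.IH by blast
    moreover have "w \<le> (r1 + r2 + 1 + 1) * (s + 1)"
    proof -
      have "w \<le> (r1 + 1) * (s + 1) + (r2 + 1) * (s + 1)" using prod.hyps(3) calculation(2,4) by linarith
      also have "\<dots> = (r1 + r2 + 1 + 1) * (s + 1)" by (simp add: add_mult_distrib)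
      finally show ?thesis .
    qed
    ultimately show ?thesis using Ap_mul by blast
  qed
qed

lemma Gp_zero:
  assumes "Gp N w x" "lie_pow sc n br N s = {0}" "derived_pow sc n mul br S = {0}"
    "2 ^ S * (s + 1) \<le> w"
  shows "x = 0"
proof -
  { fix r assume r: "x \<in> Ap r" "w \<le> (r + 1) * (s + 1)"
    have "2 ^ S * (s + 1) \<le> (r + 1) * (s + 1)" by (rule order.trans[OF assms(4) r(2)])
    then have "2 ^ S \<le> r + 1" by (rule mult_right_le_imp_le) simp
    then have "2 ^ S - 1 \<le> r" by arith
    then have "x \<in> Ap (2 ^ S - 1)" using Ap_mono[of "2 ^ S - 1" r] r(1) by blast
    then have "x = 0" using Ap_derived[of S] assms(3) by auto }
  then show ?thesis using Gp_vanish[OF assms(1,2)] by blast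
qed

definition PNs :: "'v set \<Rightarrow> 'v set" where
  "PNs N = {mul p y | p y. y \<in> N}"

lemma Gp_N: "y \<in> N \<Longrightarrow> Gp N 2 y"
  using single[of y N 1 2] by simp

lemma Gp_1: "Gp N 1 p"
  using single[of p N 0 1] by simp

lemma br_gen:
  assumes N: "ideal_like N" and G: "Gp N w x" and zs: "length zs = n - 2"
    and k: "k \<in> N \<union> PNs N"
  shows "br (x # k # zs) \<in> span {z. Gp N (Suc w) z}"
  using G
proof (induction rule: Gp.induct)
  case (single x a w)
  show ?case
  proof (cases "k \<in> N")
    case True
    then have "br (x # k # zs) \<in> Nf N (Suc a)" using nf_step[OF N single(1) _ zs] by simp
    then have "Gp N (Suc w) (br (x # k # zs))" using single(2) by (intro Gp.single[of _ _ "Suc a"]) auto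
    then show ?thesis by (intro span_base) simp
  next
    case False
    then obtain p y where k: "k = mul p y" and y: "y \<in> N" using k by (auto simp: PNs_def)
    have l1: "length (x # zs) = n - 1" using zs n2 by simp
    have e: "br (x # k # zs) = - (mul p (br (y # x # zs)) + mul y (br (p # x # zs)))"
      using swap01[OF zs, of x k] leib[OF l1, of p y] k by simp
    have sN: "subspace (Nf N (Suc a))" using Nf_ideal[OF N] ideal_like_def by blast
    have "br (x # y # zs) \<in> Nf N (Suc a)" using nf_step[OF N single(1) y zs] .
    then have u1: "br (y # x # zs) \<in> Nf N (Suc a)" using swap01[OF zs, of y x] sN subspace_neg by metis
    have u2: "br (p # x # zs) \<in> Nf N a"
      using anyslot[OF Nf_ideal[OF N], of "p # x # zs" 1 a] single(1) zs n2 by simp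
    have g1: "Gp N (Suc w) (mul p (br (y # x # zs)))"
      using Gp.prod[OF Gp_1 Gp.single[OF u1 order.refl], of "Suc w"] single(2) by simp
    have g2: "Gp N (Suc w) (mul y (br (p # x # zs)))"
      using Gp.prod[OF Gp_N[OF y] Gp.single[OF u2 order.refl], of "Suc w"] single(2) by simp
    show ?thesis unfolding e using g1 g2
      by (intro span_neg span_add span_base) auto
  qed
next
  case (prod w1 x1 w2 x2 w)
  have l1: "length (k # zs) = n - 1" using zs n2 by simp
  have e: "br (mul x1 x2 # k # zs) = mul x1 (br (x2 # k # zs)) + mul x2 (br (x1 # k # zs))"
    using leib[OF l1] .
  have a1: "mul x1 (br (x2 # k # zs)) \<in> span {z. Gp N (Suc w) z}"
  proof (rule mul_span_right[OF prod.IH(2)])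
    fix s assume "s \<in> {z. Gp N (Suc w2) z}"
    then have "Gp N (Suc w) (mul x1 s)" using Gp.prod[OF prod.hyps(1), of "Suc w2" s "Suc w"] prod.hyps(3) by simp
    then show "mul x1 s \<in> span {z. Gp N (Suc w) z}" by (intro span_base) simp
  qed simp
  have a2: "mul x2 (br (x1 # k # zs)) \<in> span {z. Gp N (Suc w) z}"
  proof (rule mul_span_right[OF prod.IH(1)])
    fix s assume "s \<in> {z. Gp N (Suc w1) z}"
    then have "Gp N (Suc w) (mul x2 s)" using Gp.prod[OF prod.hyps(2), of "Suc w1" s "Suc w"] prod.hyps(3) by simp
    then show "mul x2 s \<in> span {z. Gp N (Suc w) z}" by (intro span_base) simp
  qed simp
  show ?case unfolding e using a1 a2 by (rule span_add)
qed

lemma br_T: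
  assumes N: "ideal_like N" and x: "x \<in> span {z. Gp N w z}" and zs: "length zs = n - 2"
    and k: "k \<in> span (N \<union> PNs N)"
  shows "br (x # k # zs) \<in> span {z. Gp N (Suc w) z}"
proof (rule slot0_span[OF _ x])
  show "length (k # zs) = n - 1" using zs n2 by simp
  fix g assume g: "g \<in> {z. Gp N w z}"
  show "br (g # k # zs) \<in> span {z. Gp N (Suc w) z}"
    by (rule slot1_span[OF zs k]) (use br_gen[OF N _ zs] g in auto)
qed simp

lemma K_ideal:
  assumes N: "ideal_like N"
  shows "ideal_like (span (N \<union> PNs N))"
  unfolding ideal_like_def
proof (intro conjI ballI allI impI)
  show "subspace (span (N \<union> PNs N))" by simp
  fix x and ws :: "'v list" assume x: "x \<in> span (N \<union> PNs N)" and ws: "length ws = n - 1"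
  show "br (x # ws) \<in> span (N \<union> PNs N)"
  proof (rule slot0_span[OF ws x])
    fix s assume "s \<in> N \<union> PNs N"
    then show "br (s # ws) \<in> span (N \<union> PNs N)"
    proof
      assume "s \<in> N"
      then show ?thesis using N ws by (intro span_base) (auto simp: ideal_like_def)
    next
      assume "s \<in> PNs N"
      then obtain p y where s: "s = mul p y" and y: "y \<in> N" by (auto simp: PNs_def)
      have "br (y # ws) \<in> N" using N ws y by (auto simp: ideal_like_def)
      then have "mul p (br (y # ws)) \<in> PNs N" by (auto simp: PNs_def)
      moreover have "mul y (br (p # ws)) \<in> PNs N" using y mul_comm by (auto simp: PNs_def)
      ultimately show ?thesis unfolding s leib[OF ws] by (intro span_add span_base) auto
    qed
  qed simp
qed

lemma K_sub_G2: "span (N \<union> PNs N) \<subseteq> span {z. Gp N 2 z}"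
proof (rule span_mono)
  show "N \<union> PNs N \<subseteq> {z. Gp N 2 z}"
  proof
    fix x assume "x \<in> N \<union> PNs N"
    then show "x \<in> {z. Gp N 2 z}"
    proof
      assume "x \<in> N" then show ?thesis using Gp_N by simp
    next
      assume "x \<in> PNs N"
      then obtain p y where "x = mul p y" "y \<in> N" by (auto simp: PNs_def)
      then show ?thesis using Gp.prod[OF Gp_1 Gp_N, of y N 2] by simp
    qed
  qed
qed

lemma span_G_zero:
  assumes "lie_pow sc n br N s = {0}" "derived_pow sc n mul br S = {0}" "2 ^ S * (s + 1) \<le> w"
  shows "span {z. Gp N w z} \<subseteq> {0}"
  by (rule span_minimal) (use Gp_zero[OF _ assms(1,2,3)] in auto)

lemma K_pow:
  assumes N: "ideal_like N"
  shows "lie_pow sc n br (span (N \<union> PNs N)) j \<subseteq> span {z. Gp N (j + 2) z}"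
proof (induction j)
  case 0
  then show ?case using K_sub_G2[of N] by (simp add: numeral_2_eq_2)
next
  case (Suc j)
  show ?case unfolding lie_pow.simps br_sets_def
  proof (rule span_minimal)
    show "{br xs |xs. list_all2 (\<in>) xs (lie_pow sc n br (span (N \<union> PNs N)) j # span (N \<union> PNs N) # replicate (n - 2) UNIV)}
      \<subseteq> span {z. Gp N (Suc j + 2) z}"
    proof
      fix v assume "v \<in> {br xs |xs. list_all2 (\<in>) xs (lie_pow sc n br (span (N \<union> PNs N)) j # span (N \<union> PNs N) # replicate (n - 2) UNIV)}"
      then obtain x k zs where v: "v = br (x # k # zs)" and x: "x \<in> lie_pow sc n br (span (N \<union> PNs N)) j"
        and k: "k \<in> span (N \<union> PNs N)" and zs: "length zs = n - 2"
        unfolding la_cons2 by blast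
      show "v \<in> span {z. Gp N (Suc j + 2) z}"
        using br_T[OF N _ zs k, of x "j + 2"] x Suc.IH v by auto
    qed
  qed simp
qed

lemma P_pow:
  assumes N: "ideal_like N"
  shows "poisson_pow sc n mul br N j \<subseteq> span {z. Gp N (j + 2) z}"
proof (induction j)
  case 0
  have "N \<subseteq> span {z. Gp N 2 z}" using Gp_N span_base by blast
  then show ?case by (simp add: numeral_2_eq_2)
next
  case (Suc j)
  let ?Pj = "poisson_pow sc n mul br N j"
  have A: "br_sets sc br (?Pj # N # replicate (n - 2) UNIV) \<subseteq> span {z. Gp N (Suc j + 2) z}"
    unfolding br_sets_def
  proof (rule span_minimal)
    show "{br xs |xs. list_all2 (\<in>) xs (?Pj # N # replicate (n - 2) UNIV)} \<subseteq> span {z. Gp N (Suc j + 2) z}"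
    proof
      fix v assume "v \<in> {br xs |xs. list_all2 (\<in>) xs (?Pj # N # replicate (n - 2) UNIV)}"
      then obtain x k zs where v: "v = br (x # k # zs)" and x: "x \<in> ?Pj"
        and k: "k \<in> N" and zs: "length zs = n - 2"
        unfolding la_cons2 by blast
      have k': "k \<in> span (N \<union> PNs N)" using k by (intro span_base) simp
      show "v \<in> span {z. Gp N (Suc j + 2) z}"
        using br_T[OF N _ zs k', of x "j + 2"] x Suc.IH v by auto
    qed
  qed simp
  have B: "mul_sets sc mul ?Pj N \<subseteq> span {z. Gp N (Suc j + 2) z}"
    unfolding mul_sets_def
  proof (rule span_minimal)
    show "{mul a b |a b. a \<in> ?Pj \<and> b \<in> N} \<subseteq> span {z. Gp N (Suc j + 2) z}"
    proof
      fix v assume "v \<in> {mul a b |a b. a \<in> ?Pj \<and> b \<in> N}"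
      then obtain a b where v: "v = mul a b" and a: "a \<in> ?Pj" and b: "b \<in> N" by blast
      have a': "a \<in> span {z. Gp N (j + 2) z}" using a Suc.IH by auto
      show "v \<in> span {z. Gp N (Suc j + 2) z}" unfolding v
      proof (rule mul_span_left[OF a'])
        fix s assume "s \<in> {z. Gp N (j + 2) z}"
        then have "Gp N (Suc j + 2) (mul s b)" using Gp.prod[OF _ Gp_N[OF b], of "j + 2" s "Suc j + 2"] by simp
        then show "mul s b \<in> span {z. Gp N (Suc j + 2) z}" by (intro span_base) simp
      qed simp
    qed
  qed simp
  show ?case unfolding poisson_pow.simps sum_sets_def
    by (rule span_minimal) (use A B in auto)
qed

definition Hs :: "'v set \<Rightarrow> 'v set \<Rightarrow> nat \<Rightarrow> 'v set" where
  "Hs I J w = {x. \<exists>a b. x \<in> Nf I a \<and> x \<in> Nf J b \<and> w \<le> a + b}"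

lemma br_H:
  assumes I: "ideal_like I" and J: "ideal_like J" and x: "x \<in> Hs I J w" and zs: "length zs = n - 2"
    and k: "k \<in> I \<union> J"
  shows "br (x # k # zs) \<in> Hs I J (Suc w)"
proof -
  obtain a b where a: "x \<in> Nf I a" and b: "x \<in> Nf J b" and w: "w \<le> a + b" using x by (auto simp: Hs_def)
  have l: "length (k # zs) = n - 1" using zs n2 by simp
  have ia: "br (x # k # zs) \<in> Nf I a" using Nf_ideal[OF I, of a] a l by (auto simp: ideal_like_def)
  have jb: "br (x # k # zs) \<in> Nf J b" using Nf_ideal[OF J, of b] b l by (auto simp: ideal_like_def)
  show ?thesis using k
  proof
    assume "k \<in> I"
    then have "br (x # k # zs) \<in> Nf I (Suc a)" using nf_step[OF I a _ zs] by simp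
    then show ?thesis using jb w unfolding Hs_def by (intro CollectI exI[of _ "Suc a"] exI[of _ b]) auto
  next
    assume "k \<in> J"
    then have "br (x # k # zs) \<in> Nf J (Suc b)" using nf_step[OF J b _ zs] by simp
    then show ?thesis using ia w unfolding Hs_def by (intro CollectI exI[of _ a] exI[of _ "Suc b"]) auto
  qed
qed

lemma H_T:
  assumes I: "ideal_like I" and J: "ideal_like J" and x: "x \<in> span (Hs I J w)" and zs: "length zs = n - 2"
    and k: "k \<in> span (I \<union> J)"
  shows "br (x # k # zs) \<in> span (Hs I J (Suc w))"
proof (rule slot0_span[OF _ x])
  show "length (k # zs) = n - 1" using zs n2 by simp
  fix g assume g: "g \<in> Hs I J w"
  show "br (g # k # zs) \<in> span (Hs I J (Suc w))"
    by (rule slot1_span[OF zs k]) (simp, rule span_base, rule br_H[OF I J g zs], assumption)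
qed simp

lemma sum_ideal:
  assumes I: "ideal_like I" and J: "ideal_like J"
  shows "ideal_like (span (I \<union> J))"
  unfolding ideal_like_def
proof (intro conjI ballI allI impI)
  show "subspace (span (I \<union> J))" by simp
  fix x and ws :: "'v list" assume x: "x \<in> span (I \<union> J)" and ws: "length ws = n - 1"
  show "br (x # ws) \<in> span (I \<union> J)"
  proof (rule slot0_span[OF ws x])
    fix s assume "s \<in> I \<union> J"
    then have "br (s # ws) \<in> I \<union> J" using I J ws by (auto simp: ideal_like_def)
    then show "br (s # ws) \<in> span (I \<union> J)" by (rule span_base)
  qed simp
qed

lemma sum_pow:
  assumes I: "ideal_like I" and J: "ideal_like J"
  shows "lie_pow sc n br (span (I \<union> J)) j \<subseteq> span (Hs I J (Suc j))"
proof (induction j)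
  case 0
  have "I \<union> J \<subseteq> Hs I J 1"
  proof
    fix x assume "x \<in> I \<union> J"
    then show "x \<in> Hs I J 1"
    proof
      assume "x \<in> I" then show ?thesis unfolding Hs_def by (intro CollectI exI[of _ 1] exI[of _ 0]) auto
    next
      assume "x \<in> J" then show ?thesis unfolding Hs_def by (intro CollectI exI[of _ 0] exI[of _ 1]) auto
    qed
  qed
  then show ?case using span_mono by auto
next
  case (Suc j)
  show ?case unfolding lie_pow.simps br_sets_def
  proof (rule span_minimal)
    show "{br xs |xs. list_all2 (\<in>) xs (lie_pow sc n br (span (I \<union> J)) j # span (I \<union> J) # replicate (n - 2) UNIV)}
      \<subseteq> span (Hs I J (Suc (Suc j)))"
    proof
      fix v assume "v \<in> {br xs |xs. list_all2 (\<in>) xs (lie_pow sc n br (span (I \<union> J)) j # span (I \<union> J) # replicate (n - 2) UNIV)}"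
      then obtain x k zs where v: "v = br (x # k # zs)" and x: "x \<in> lie_pow sc n br (span (I \<union> J)) j"
        and k: "k \<in> span (I \<union> J)" and zs: "length zs = n - 2"
        unfolding la_cons2 by blast
      show "v \<in> span (Hs I J (Suc (Suc j)))"
        using H_T[OF I J _ zs k, of x "Suc j"] x Suc.IH v by auto
    qed
  qed simp
qed

lemma Hs_zero:
  assumes "lie_pow sc n br I sI = {0}" "lie_pow sc n br J sJ = {0}" "sI + sJ + 2 \<le> w"
  shows "Hs I J w \<subseteq> {0}"
proof
  fix x assume "x \<in> Hs I J w"
  then obtain a b where a: "x \<in> Nf I a" and b: "x \<in> Nf J b" and w: "w \<le> a + b" by (auto simp: Hs_def)
  show "x \<in> {0}"
  proof (cases "sI + 1 \<le> a")
    case True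
    then obtain a' where "a = Suc a'" "sI \<le> a'" by (cases a) auto
    then show ?thesis using a lie_pow_zero[OF assms(1)] by auto
  next
    case False
    then have "sJ + 1 \<le> b" using w assms(3) by linarith
    then obtain b' where "b = Suc b'" "sJ \<le> b'" by (cases b) auto
    then show ?thesis using b lie_pow_zero[OF assms(2)] by auto
  qed
qed

lemma lnil_iff: "lie_nilpotent_ideal sc n br N \<longleftrightarrow> ideal_like N \<and> (\<exists>s. lie_pow sc n br N s = {0})"
  by (simp add: lie_nilpotent_ideal_def lie_ideal_iff)

lemma sum_nil:
  assumes "lie_nilpotent_ideal sc n br I" "lie_nilpotent_ideal sc n br J"
  shows "lie_nilpotent_ideal sc n br (span (I \<union> J))"
proof -
  obtain sI sJ where I: "ideal_like I" "lie_pow sc n br I sI = {0}" and J: "ideal_like J" "lie_pow sc n br J sJ = {0}"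
    using assms by (auto simp: lnil_iff)
  let ?w = "sI + sJ + 2"
  have "lie_pow sc n br (span (I \<union> J)) ?w \<subseteq> {0}"
    using sum_pow[OF I(1) J(1), of ?w] span_minimal[OF Hs_zero[OF I(2) J(2), of "Suc ?w"]] by auto
  moreover have "0 \<in> lie_pow sc n br (span (I \<union> J)) ?w"
    using lie_pow_sub[of "span (I \<union> J)" ?w] subspace_0 by auto
  ultimately show ?thesis unfolding lnil_iff using sum_ideal[OF I(1) J(1)] by blast
qed

lemma zero_nil: "lie_nilpotent_ideal sc n br {0}"
proof -
  have "br (0 # ws) = 0" if "length ws = n - 1" for ws :: "'v list"
    using br_zero[of "0 # ws" 0] n2 that by simp
  then have "ideal_like {0}" unfolding ideal_like_def by simp
  then show ?thesis unfolding lnil_iff by (intro conjI exI[of _ 0]) auto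
qed

lemma exists_nilrad:
  assumes fd: "finite_dimensional_vector_space sc B"
  shows "\<exists>N. lie_nilpotent_ideal sc n br N \<and> (\<forall>I. lie_nilpotent_ideal sc n br I \<longrightarrow> I \<subseteq> N)"
proof -
  interpret fd: finite_dimensional_vector_space sc B by (rule fd)
  let ?D = "{dim S | S. lie_nilpotent_ideal sc n br S}"
  have "?D \<subseteq> {..fd.dimension}"
  proof
    fix d assume "d \<in> ?D"
    then obtain S where "d = dim S" by blast
    then show "d \<in> {..fd.dimension}" using fd.dim_subset_UNIV[of S] by simp
  qed
  then have fin: "finite ?D" by (rule finite_subset) simp
  have "dim {0} \<in> ?D" using zero_nil by (intro CollectI exI[of _ "{0}"]) simp
  then have ne: "?D \<noteq> {}" by auto
  have "Max ?D \<in> ?D" by (rule Max_in[OF fin ne])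
  then have "\<exists>S. Max ?D = dim S \<and> lie_nilpotent_ideal sc n br S" by simp
  then obtain N where N: "lie_nilpotent_ideal sc n br N" "dim N = Max ?D" by auto
  have "I \<subseteq> N" if I: "lie_nilpotent_ideal sc n br I" for I
  proof -
    let ?M = "span (N \<union> I)"
    have M: "lie_nilpotent_ideal sc n br ?M" using sum_nil[OF N(1) I] .
    then have "dim ?M \<in> ?D" by (intro CollectI exI[of _ ?M]) simp
    then have "dim ?M \<le> Max ?D" by (rule Max_ge[OF fin])
    then have dle: "dim ?M \<le> dim N" using N(2) by simp
    have sN: "subspace N" using N(1) unfolding lnil_iff ideal_like_def by blast
    have NM: "N \<subseteq> ?M" using span_superset[of "N \<union> I"] by blast
    have "N = ?M" by (rule fd.subspace_dim_equal[OF sN subspace_span NM dle])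
    moreover have "I \<subseteq> ?M" using span_superset[of "N \<union> I"] by blast
    ultimately show ?thesis by simp
  qed
  then show ?thesis using N(1) by blast
qed

lemma pp_zero: "subspace N \<Longrightarrow> 0 \<in> poisson_pow sc n mul br N j"
  by (cases j) (auto simp: sum_sets_def span_zero subspace_0)

lemma lie_le_pp: "subspace I \<Longrightarrow> lie_pow sc n br I k \<subseteq> poisson_pow sc n mul br I k"
proof (induction k)
  case 0
  then show ?case by simp
next
  case (Suc k)
  have "br_sets sc br (lie_pow sc n br I k # I # replicate (n - 2) UNIV)
     \<subseteq> br_sets sc br (poisson_pow sc n mul br I k # I # replicate (n - 2) UNIV)"
    unfolding br_sets_def
  proof (rule span_mono)
    show "{br xs |xs. list_all2 (\<in>) xs (lie_pow sc n br I k # I # replicate (n - 2) UNIV)}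
      \<subseteq> {br xs |xs. list_all2 (\<in>) xs (poisson_pow sc n mul br I k # I # replicate (n - 2) UNIV)}"
      using Suc.IH Suc.prems unfolding la_cons2 by blast
  qed
  also have "\<dots> \<subseteq> poisson_pow sc n mul br I (Suc k)"
    unfolding poisson_pow.simps sum_sets_def using span_superset by blast
  finally show ?case by simp
qed

lemma main:
  assumes fd: "finite_dimensional_vector_space sc B" and sol: "derived_pow sc n mul br S = {0}"
  shows "\<exists>N. is_Nil sc n mul br N \<and> is_nilradical sc n br N"
proof -
  obtain N where N: "lie_nilpotent_ideal sc n br N" and Nmax: "\<And>I. lie_nilpotent_ideal sc n br I \<Longrightarrow> I \<subseteq> N"
    using exists_nilrad[OF fd] by blast
  obtain s where Ni: "ideal_like N" and Ns: "lie_pow sc n br N s = {0}" using N unfolding lnil_iff by blast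
  have sN: "subspace N" using Ni ideal_like_def by blast
  let ?W = "2 ^ S * (s + 1)"
  have G0: "span {z. Gp N (?W + 2) z} \<subseteq> {0}" by (rule span_G_zero[OF Ns sol]) simp
  let ?K = "span (N \<union> PNs N)"
  have "lie_pow sc n br ?K ?W \<subseteq> {0}" using K_pow[OF Ni, of ?W] G0 by blast
  moreover have "0 \<in> lie_pow sc n br ?K ?W" using lie_pow_sub[of ?K ?W] subspace_0 by auto
  ultimately have "lie_nilpotent_ideal sc n br ?K" unfolding lnil_iff using K_ideal[OF Ni] by blast
  then have "?K \<subseteq> N" by (rule Nmax)
  then have PN: "PNs N \<subseteq> N" using span_superset[of "N \<union> PNs N"] by blast
  have pid: "poisson_ideal sc n mul br N"
    unfolding poisson_ideal_def
  proof (intro conjI)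
    show "subspace N" by (rule sN)
    show "mul_sets sc mul UNIV N \<subseteq> N" unfolding mul_sets_def
      by (rule span_minimal[OF _ sN]) (use PN in \<open>auto simp: PNs_def\<close>)
    show "br_sets sc br (N # replicate (n - 1) UNIV) \<subseteq> N"
      using N unfolding lie_nilpotent_ideal_def lie_ideal_def by blast
  qed
  have "poisson_pow sc n mul br N ?W \<subseteq> {0}" using P_pow[OF Ni, of ?W] G0 by blast
  moreover have "0 \<in> poisson_pow sc n mul br N ?W" by (rule pp_zero[OF sN])
  ultimately have pn: "poisson_nilpotent_ideal sc n mul br N"
    unfolding poisson_nilpotent_ideal_def using pid by blast
  have "I \<subseteq> N" if I: "poisson_nilpotent_ideal sc n mul br I" for I
  proof -
    obtain t where Ip: "poisson_ideal sc n mul br I" and It: "poisson_pow sc n mul br I t = {0}"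
      using I unfolding poisson_nilpotent_ideal_def by blast
    have sI: "subspace I" using Ip unfolding poisson_ideal_def by blast
    have li: "lie_ideal sc n br I" using Ip unfolding poisson_ideal_def lie_ideal_def by blast
    have "lie_pow sc n br I t \<subseteq> {0}" using lie_le_pp[OF sI, of t] It by blast
    moreover have "0 \<in> lie_pow sc n br I t" using lie_pow_sub[OF sI, of t] subspace_0 by blast
    ultimately have "lie_nilpotent_ideal sc n br I" unfolding lie_nilpotent_ideal_def using li by blast
    then show ?thesis by (rule Nmax)
  qed
  then have "is_Nil sc n mul br N" unfolding is_Nil_def using pn by blast
  moreover have "is_nilradical sc n br N" unfolding is_nilradical_def using N Nmax by blast
  ultimately show ?thesis by blast
qed

end

theorem corollary5p11:
  fixes sc :: "'k::field_char_0 \<Rightarrow> 'v::ab_group_add \<Rightarrow> 'v"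
    and n :: nat
    and mul :: "'v \<Rightarrow> 'v \<Rightarrow> 'v"
    and br :: "'v list \<Rightarrow> 'v"
  assumes "alg_closed TYPE('k)"
    and "poisson_nlie sc n mul br"
    and "fin_dim_vs sc"
    and "poisson_solvable sc n mul br"
  shows "\<exists>N. is_Nil sc n mul br N \<and> is_nilradical sc n br N"
proof -
  interpret PN sc n mul br by (rule PN.intro) (rule assms(2))
  obtain B where fd: "finite_dimensional_vector_space sc B" using assms(3) unfolding fin_dim_vs_def by blast
  obtain S where sol: "derived_pow sc n mul br S = {0}" using assms(4) unfolding poisson_solvable_def by blast
  show ?thesis by (rule main[OF fd sol])
qed

end
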